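(* \[ \lim_{M\to\infty}\ \lim_{k\to\infty}\ \sum_{i=M}^{k-M}\Pr[BINGO(i,k-i)]=0, \] where for each fixed $M$ the inner limit exists.
   Context: Fix $\alpha>1$. Let $(X_k,Y_k)_{k\ge2}$ be the Markov chain on $\mathbb N\times\mathbb N$ with $(X_2,Y_2)=(1,1)$ and, from state $(i,j)$, moving to $(i+1,j)$ with probability $i^\alpha/(i^\alpha+j^\alpha)$ and to $(i,j+1)$ with probability $j^\alpha/(i^\alpha+j^\alpha)$. $BINGO(i,j)$ is the event that the chain visits the state $(i,j)$. *)

theory Defs
  imports "HOL-Probability.Probability_Mass_Function"
begin

definition bingo_step :: "real \<Rightarrow> nat \<times> nat \<Rightarrow> (nat \<times> nat) pmf" where
  "bingo_step \<alpha> s = (case s of (i, j) \<Rightarrow>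
     map_pmf (\<lambda>b. if b then (i + 1, j) else (i, j + 1))
       (bernoulli_pmf (real i powr \<alpha> / (real i powr \<alpha> + real j powr \<alpha>))))"

text \<open>bingo_dist a n is the law of (X_(n+2), Y_(n+2)); the chain starts at time 2 in (1,1).\<close>
primrec bingo_dist :: "real \<Rightarrow> nat \<Rightarrow> (nat \<times> nat) pmf" where
  "bingo_dist \<alpha> 0 = return_pmf (1, 1)"
| "bingo_dist \<alpha> (Suc n) = bind_pmf (bingo_dist \<alpha> n) (bingo_step \<alpha>)"

text \<open>Pr[BINGO(i,j)]: since X_k + Y_k = k, the chain visits (i,j) iff it is at (i,j) at time i+j.\<close>
definition bingo_prob :: "real \<Rightarrow> nat \<Rightarrow> nat \<Rightarrow> real" where
  "bingo_prob \<alpha> i j = pmf (bingo_dist \<alpha> (i + j - 2)) (i, j)"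

end

theory Submission
  imports Defs "HOL-Probability.Distributions"
begin

definition Tp :: "real \<Rightarrow> (real \<Rightarrow> ennreal) \<Rightarrow> real \<Rightarrow> ennreal" where
  "Tp l f x = (\<integral>\<^sup>+t. ennreal (exponential_density l t) * f (x + t) \<partial>lborel)"

definition Tm :: "real \<Rightarrow> (real \<Rightarrow> ennreal) \<Rightarrow> real \<Rightarrow> ennreal" where
  "Tm l f x = Tp l (\<lambda>y. f (- y)) (- x)"

lemma Tp_meas[measurable]:
  assumes [measurable]: "f \<in> borel_measurable borel"
  shows "Tp l f \<in> borel_measurable borel"
proof -
  have "(\<lambda>x. \<integral>\<^sup>+t. ennreal (exponential_density l t) * f (x + t) \<partial>lborel) \<in> borel_measurable lborel"
    by measurable
  then show ?thesis unfolding Tp_def[abs_def] by simp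
qed

lemma Tm_meas[measurable]:
  assumes [measurable]: "f \<in> borel_measurable borel"
  shows "Tm l f \<in> borel_measurable borel"
  unfolding Tm_def[abs_def] by measurable

lemma exp_dens_int: "0 < l \<Longrightarrow> (\<integral>\<^sup>+t. ennreal (exponential_density l t) \<partial>lborel) = 1"
  using nn_integral_erlang_ith_moment[of l 0 0] by simp

lemma exp_dens_mom: "0 < l \<Longrightarrow> (\<integral>\<^sup>+t. ennreal (exponential_density l t * t) \<partial>lborel) = 1 / l"
  using nn_integral_erlang_ith_moment[of l 0 1] by simp

lemma L1: assumes "0 < l" "0 < m"
  shows "(\<integral>\<^sup>+t. ennreal (exponential_density l t) * ennreal (exp (- m * t)) \<partial>lborel) = ennreal (l / (l + m))"
proof -
  have "(\<integral>\<^sup>+t. ennreal (exponential_density l t) * ennreal (exp (- m * t)) \<partial>lborel)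
     = (\<integral>\<^sup>+t. ennreal (l / (l + m)) * ennreal (exponential_density (l+m) t) \<partial>lborel)"
    using assms
    by (intro nn_integral_cong) (auto simp: exponential_density_def ennreal_mult'[symmetric] field_simps
        exp_add[symmetric] simp del: ennreal_mult')
  also have "\<dots> = ennreal (l / (l + m))"
    using assms by (simp add: nn_integral_cmult exp_dens_int)
  finally show ?thesis .
qed


lemma Tm_eq: "Tm m f y = (\<integral>\<^sup>+s. ennreal (exponential_density m s) * f (y - s) \<partial>lborel)"
  by (simp add: Tm_def Tp_def)

lemma KEY:
  assumes l: "0 < l" and m: "0 < m" and [measurable]: "f \<in> borel_measurable borel"
  shows "Tp l (Tm m f) x = ennreal (l/(l+m)) * Tm m f x + ennreal (m/(l+m)) * Tp l f x"
proof -
  define ed where "ed = exponential_density"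
  have [measurable]: "ed a \<in> borel_measurable borel" for a unfolding ed_def by measurable
  have ed0: "t < 0 \<Longrightarrow> ed a t = 0" for a t by (simp add: ed_def exponential_density_def)
  have split: "Tm m f (x+t) = (\<integral>\<^sup>+s. ennreal (ed m s) * (if t \<le> s then 1 else 0) * f (x+t-s) \<partial>lborel)
       + (\<integral>\<^sup>+s. ennreal (ed m s) * (if s < t then 1 else 0) * f (x+t-s) \<partial>lborel)" for t
    unfolding Tm_eq ed_def[symmetric]
    by (subst nn_integral_add[symmetric]) (auto intro!: nn_integral_cong split: split_indicator)
  have A_inner: "(\<integral>\<^sup>+s. ennreal (ed m s) * (if t \<le> s then 1 else 0) * f (x+t-s) \<partial>lborel)
       = ennreal (exp (- m * t)) * Tm m f x" if t: "t \<ge> 0" for t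
  proof -
    have "(\<integral>\<^sup>+s. ennreal (ed m s) * (if t \<le> s then 1 else 0) * f (x+t-s) \<partial>lborel)
        = (\<integral>\<^sup>+r. ennreal (ed m (t + r)) * (if t \<le> t + r then 1 else 0) * f (x+t-(t + r)) \<partial>lborel)"
      using nn_integral_real_affine[where c=1 and t=t and f="\<lambda>s. ennreal (ed m s) * (if t \<le> s then 1 else 0) * f (x+t-s)"] by simp
    also have "\<dots> = (\<integral>\<^sup>+r. ennreal (exp (- m * t)) * (ennreal (ed m r) * f (x - r)) \<partial>lborel)"
      using t m
      by (intro nn_integral_cong) (auto simp: ed_def exponential_density_def ennreal_mult'[symmetric]
          exp_add[symmetric] field_simps split: split_indicator)
    also have "\<dots> = ennreal (exp (- m * t)) * Tm m f x"
      by (subst nn_integral_cmult) (auto simp: Tm_eq ed_def)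
    finally show ?thesis .
  qed
  have B_inner: "(\<integral>\<^sup>+t. ennreal (ed l t) * (ennreal (ed m s) * (if s < t then 1 else 0) * f (x+t-s)) \<partial>lborel)
       = ennreal (ed m s) * ennreal (exp (- l * s)) * Tp l f x" if s: "s \<ge> 0" for s
  proof -
    have "(\<integral>\<^sup>+t. ennreal (ed l t) * (ennreal (ed m s) * (if s < t then 1 else 0) * f (x+t-s)) \<partial>lborel)
        = (\<integral>\<^sup>+r. ennreal (ed l (s + r)) * (ennreal (ed m s) * (if s < s + r then 1 else 0) * f (x+(s + r)-s)) \<partial>lborel)"
    proof -
      have meas: "(\<lambda>t. ennreal (ed l t) * (ennreal (ed m s) * (if s < t then 1 else 0) * f (x+t-s))) \<in> borel_measurable borel"
        by measurable
      show ?thesis using nn_integral_real_affine[OF meas, where c=1 and t=s] by simp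
    qed
    also have "\<dots> = (\<integral>\<^sup>+r. (ennreal (ed m s) * ennreal (exp (- l * s))) * (ennreal (ed l r) * indicator {0<..} r * f (x + r)) \<partial>lborel)"
      using s l m
      by (intro nn_integral_cong) (auto simp: ed_def exponential_density_def ennreal_mult'[symmetric]
          exp_add[symmetric] field_simps split: split_indicator)
    also have "\<dots> = (ennreal (ed m s) * ennreal (exp (- l * s))) * (\<integral>\<^sup>+r. ennreal (ed l r) * indicator {0<..} r * f (x + r) \<partial>lborel)"
      by (subst nn_integral_cmult) auto
    also have "(\<integral>\<^sup>+r. ennreal (ed l r) * indicator {0<..} r * f (x + r) \<partial>lborel) = Tp l f x"
      unfolding Tp_def ed_def
      by (intro nn_integral_cong_AE AE_mp[OF AE_lborel_singleton[of 0] AE_I2]) (auto simp: exponential_density_def split: split_indicator)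
    finally show ?thesis by simp
  qed
  have "Tp l (Tm m f) x = (\<integral>\<^sup>+t. ennreal (ed l t) * Tm m f (x + t) \<partial>lborel)"
    by (simp add: Tp_def ed_def)
  also have "\<dots> = (\<integral>\<^sup>+t. ennreal (ed l t) * (\<integral>\<^sup>+s. ennreal (ed m s) * (if t \<le> s then 1 else 0) * f (x+t-s) \<partial>lborel)
       + ennreal (ed l t) * (\<integral>\<^sup>+s. ennreal (ed m s) * (if s < t then 1 else 0) * f (x+t-s) \<partial>lborel) \<partial>lborel)"
    by (simp add: split distrib_left)
  also have "\<dots> = (\<integral>\<^sup>+t. ennreal (ed l t) * (\<integral>\<^sup>+s. ennreal (ed m s) * (if t \<le> s then 1 else 0) * f (x+t-s) \<partial>lborel) \<partial>lborel)
       + (\<integral>\<^sup>+t. ennreal (ed l t) * (\<integral>\<^sup>+s. ennreal (ed m s) * (if s < t then 1 else 0) * f (x+t-s) \<partial>lborel) \<partial>lborel)"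
    by (rule nn_integral_add) auto
  also have "(\<integral>\<^sup>+t. ennreal (ed l t) * (\<integral>\<^sup>+s. ennreal (ed m s) * (if t \<le> s then 1 else 0) * f (x+t-s) \<partial>lborel) \<partial>lborel)
      = (\<integral>\<^sup>+t. Tm m f x * (ennreal (ed l t) * ennreal (exp (- m * t))) \<partial>lborel)"
  proof (intro nn_integral_cong)
    fix t show "ennreal (ed l t) * (\<integral>\<^sup>+s. ennreal (ed m s) * (if t \<le> s then 1 else 0) * f (x+t-s) \<partial>lborel)
      = Tm m f x * (ennreal (ed l t) * ennreal (exp (- m * t)))"
      by (cases "t < 0") (simp add: ed0, subst A_inner, simp_all add: mult_ac)
  qed
  also have "\<dots> = Tm m f x * ennreal (l / (l + m))"
    using L1[OF l m] by (subst nn_integral_cmult) (auto simp: ed_def)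
  also have "(\<integral>\<^sup>+t. ennreal (ed l t) * (\<integral>\<^sup>+s. ennreal (ed m s) * (if s < t then 1 else 0) * f (x+t-s) \<partial>lborel) \<partial>lborel)
      = (\<integral>\<^sup>+t. (\<integral>\<^sup>+s. ennreal (ed l t) * (ennreal (ed m s) * (if s < t then 1 else 0) * f (x+t-s)) \<partial>lborel) \<partial>lborel)"
    by (intro nn_integral_cong) (subst nn_integral_cmult; auto)
  also have "\<dots> = (\<integral>\<^sup>+s. (\<integral>\<^sup>+t. ennreal (ed l t) * (ennreal (ed m s) * (if s < t then 1 else 0) * f (x+t-s)) \<partial>lborel) \<partial>lborel)"
    by (rule lborel_pair.Fubini'[symmetric]) measurable
  also have "\<dots> = (\<integral>\<^sup>+s. Tp l f x * (ennreal (ed m s) * ennreal (exp (- l * s))) \<partial>lborel)"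
  proof (intro nn_integral_cong)
    fix s show "(\<integral>\<^sup>+t. ennreal (ed l t) * (ennreal (ed m s) * (if s < t then 1 else 0) * f (x+t-s)) \<partial>lborel)
      = Tp l f x * (ennreal (ed m s) * ennreal (exp (- l * s)))"
      by (cases "s < 0") (simp add: ed0, subst B_inner, simp_all add: mult_ac)
  qed
  also have "\<dots> = Tp l f x * ennreal (m / (m + l))"
    using L1[OF m l] by (subst nn_integral_cmult) (auto simp: ed_def)
  finally show ?thesis by (simp add: mult_ac add_ac)
qed

lemma COMM:
  assumes l: "0 < l" and m: "0 < m" and [measurable]: "f \<in> borel_measurable borel"
  shows "Tm m (Tp l f) x = Tp l (Tm m f) x"
proof -
  define f' where "f' = (\<lambda>z. f (- z))"
  have [measurable]: "f' \<in> borel_measurable borel" unfolding f'_def by measurable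
  have e1: "(\<lambda>y. Tp l f (- y)) = Tm l f'" by (auto simp: Tm_def f'_def)
  have "Tm m (Tp l f) x = Tp m (Tm l f') (- x)" by (simp add: Tm_def e1)
  also have "\<dots> = ennreal (m/(m+l)) * Tm l f' (-x) + ennreal (l/(m+l)) * Tp m f' (-x)"
    by (rule KEY[OF m l]) measurable
  also have "Tm l f' (-x) = Tp l f x" by (simp add: Tm_def f'_def)
  also have "Tp m f' (-x) = Tm m f x" by (simp add: Tm_def f'_def)
  finally have eq: "Tm m (Tp l f) x = ennreal (m/(l+m)) * Tp l f x + ennreal (l/(l+m)) * Tm m f x"
    by (simp only: add.commute[of m l])
  show ?thesis unfolding KEY[OF l m assms(3)] eq by (rule add.commute)
qed

lemma Tp_const: "0 < l \<Longrightarrow> Tp l (\<lambda>_. c) x = c"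
  unfolding Tp_def by (subst nn_integral_multc) (auto simp: exp_dens_int)

lemma Tm_const: "0 < l \<Longrightarrow> Tm l (\<lambda>_. c) x = c"
  unfolding Tm_def by (simp add: Tp_const)

lemma Tp_add:
  assumes [measurable]: "f \<in> borel_measurable borel" "g \<in> borel_measurable borel"
  shows "Tp l (\<lambda>y. f y + g y) x = Tp l f x + Tp l g x"
  unfolding Tp_def by (subst nn_integral_add[symmetric]) (auto simp: distrib_left)

lemma Tm_add:
  assumes [measurable]: "f \<in> borel_measurable borel" "g \<in> borel_measurable borel"
  shows "Tm l (\<lambda>y. f y + g y) x = Tm l f x + Tm l g x"
  unfolding Tm_def by (rule Tp_add) auto

lemma Tp_mono: "(\<And>y. f y \<le> g y) \<Longrightarrow> Tp l f x \<le> Tp l g x"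
  unfolding Tp_def by (intro nn_integral_mono mult_left_mono) auto

lemma Tm_mono: "(\<And>y. f y \<le> g y) \<Longrightarrow> Tm l f x \<le> Tm l g x"
  unfolding Tm_def by (rule Tp_mono) auto

lemma Tp_int:
  assumes l: "0 < l" and [measurable]: "f \<in> borel_measurable borel"
  shows "(\<integral>\<^sup>+x. Tp l f x \<partial>lborel) = (\<integral>\<^sup>+x. f x \<partial>lborel)"
proof -
  have "(\<integral>\<^sup>+x. Tp l f x \<partial>lborel) = (\<integral>\<^sup>+x. \<integral>\<^sup>+t. ennreal (exponential_density l t) * f (x + t) \<partial>lborel \<partial>lborel)"
    by (simp add: Tp_def)
  also have "\<dots> = (\<integral>\<^sup>+t. \<integral>\<^sup>+x. ennreal (exponential_density l t) * f (x + t) \<partial>lborel \<partial>lborel)"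
    by (rule lborel_pair.Fubini') measurable
  also have "\<dots> = (\<integral>\<^sup>+t. ennreal (exponential_density l t) * (\<integral>\<^sup>+x. f x \<partial>lborel) \<partial>lborel)"
  proof (intro nn_integral_cong)
    fix t
    have "(\<integral>\<^sup>+x. f x \<partial>lborel) = (\<integral>\<^sup>+x. f (x + t) \<partial>lborel)"
      using nn_integral_real_affine[where c=1 and t=t and f=f] by (simp add: add.commute)
    then show "(\<integral>\<^sup>+x. ennreal (exponential_density l t) * f (x + t) \<partial>lborel) = ennreal (exponential_density l t) * (\<integral>\<^sup>+x. f x \<partial>lborel)"
      by (subst nn_integral_cmult) auto
  qed
  also have "\<dots> = (\<integral>\<^sup>+x. f x \<partial>lborel)"
    using l by (subst nn_integral_multc) (auto simp: exp_dens_int)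
  finally show ?thesis .
qed

lemma Tm_int:
  assumes l: "0 < l" and [measurable]: "f \<in> borel_measurable borel"
  shows "(\<integral>\<^sup>+x. Tm l f x \<partial>lborel) = (\<integral>\<^sup>+x. f x \<partial>lborel)"
proof -
  have refl: "(\<integral>\<^sup>+x. g x \<partial>lborel) = (\<integral>\<^sup>+x. g (- x) \<partial>lborel)" if [measurable]: "g \<in> borel_measurable borel" for g :: "real \<Rightarrow> ennreal"
    using nn_integral_real_affine[where c="-1" and t=0 and f=g] by simp
  have "(\<integral>\<^sup>+x. Tm l f x \<partial>lborel) = (\<integral>\<^sup>+x. Tp l (\<lambda>y. f (- y)) x \<partial>lborel)"
    unfolding Tm_def by (subst refl[of "Tp l (\<lambda>y. f (- y))"]) auto
  also have "\<dots> = (\<integral>\<^sup>+x. f (- x) \<partial>lborel)" by (rule Tp_int[OF l]) measurable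
  also have "\<dots> = (\<integral>\<^sup>+x. f x \<partial>lborel)" by (rule refl[symmetric]) measurable
  finally show ?thesis .
qed

lemma Tp_absbound:
  assumes l: "0 < l" and eta: "0 < eta" and c: "0 \<le> c" and f: "\<And>y. f y \<le> ennreal ((\<bar>y\<bar> + c) / eta)"
  shows "Tp l f x \<le> ennreal ((\<bar>x\<bar> + c + 1 / l) / eta)"
proof -
  have "Tp l f x \<le> (\<integral>\<^sup>+t. ennreal (exponential_density l t * ((\<bar>x\<bar> + c) / eta)) + ennreal (exponential_density l t * t / eta) \<partial>lborel)"
    unfolding Tp_def
  proof (intro nn_integral_mono)
    fix t
    show "ennreal (exponential_density l t) * f (x + t) \<le> ennreal (exponential_density l t * ((\<bar>x\<bar> + c) / eta)) + ennreal (exponential_density l t * t / eta)"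
    proof (cases "t < 0")
      case True then show ?thesis by (simp add: exponential_density_def)
    next
      case False
      have "ennreal (exponential_density l t) * f (x + t) \<le> ennreal (exponential_density l t) * ennreal ((\<bar>x + t\<bar> + c) / eta)"
        by (intro mult_left_mono f) auto
      also have "\<dots> \<le> ennreal (exponential_density l t) * ennreal ((\<bar>x\<bar> + c + t) / eta)"
        using False eta by (intro mult_left_mono ennreal_leI divide_right_mono) auto
      also have "\<dots> = ennreal (exponential_density l t * ((\<bar>x\<bar> + c) / eta)) + ennreal (exponential_density l t * t / eta)"
        using False eta l c
        by (simp add: ennreal_mult'[symmetric] ennreal_plus[symmetric] exponential_density_nonneg add_divide_distrib distrib_left del: ennreal_plus)
      finally show ?thesis .
    qed
  qed
  also have "\<dots> = (\<integral>\<^sup>+t. ennreal (exponential_density l t * ((\<bar>x\<bar> + c) / eta)) \<partial>lborel) + (\<integral>\<^sup>+t. ennreal (exponential_density l t * t / eta) \<partial>lborel)"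
    by (rule nn_integral_add) auto
  also have "(\<integral>\<^sup>+t. ennreal (exponential_density l t * ((\<bar>x\<bar> + c) / eta)) \<partial>lborel) = ennreal ((\<bar>x\<bar> + c) / eta)"
  proof -
    have "(\<integral>\<^sup>+t. ennreal (exponential_density l t * ((\<bar>x\<bar> + c) / eta)) \<partial>lborel) = (\<integral>\<^sup>+t. ennreal (exponential_density l t) * ennreal ((\<bar>x\<bar> + c) / eta) \<partial>lborel)"
      using eta c by (intro nn_integral_cong) (auto simp: ennreal_mult''[symmetric])
    also have "\<dots> = ennreal ((\<bar>x\<bar> + c) / eta)"
      using exp_dens_int[OF l] by (subst nn_integral_multc) auto
    finally show ?thesis .
  qed
  also have "(\<integral>\<^sup>+t. ennreal (exponential_density l t * t / eta) \<partial>lborel) = ennreal (1 / l / eta)"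
  proof -
    have "(\<integral>\<^sup>+t. ennreal (exponential_density l t * t / eta) \<partial>lborel) = (\<integral>\<^sup>+t. ennreal (exponential_density l t * t) * ennreal (1 / eta) \<partial>lborel)"
      using eta by (intro nn_integral_cong) (auto simp: ennreal_mult''[symmetric] exponential_density_def)
    also have "\<dots> = ennreal (1 / l) * ennreal (1 / eta)"
      using exp_dens_mom[OF l] by (subst nn_integral_multc) auto
    finally show ?thesis using eta l by (simp add: ennreal_mult''[symmetric])
  qed
  also have "ennreal ((\<bar>x\<bar> + c) / eta) + ennreal (1 / l / eta) = ennreal ((\<bar>x\<bar> + c + 1 / l) / eta)"
    using l eta c by (simp add: ennreal_plus[symmetric] add_divide_distrib del: ennreal_plus)
  finally show ?thesis .
qed

lemma Tm_absbound:
  assumes l: "0 < l" and eta: "0 < eta" and c: "0 \<le> c" and f: "\<And>y. f y \<le> ennreal ((\<bar>y\<bar> + c) / eta)"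
  shows "Tm l f x \<le> ennreal ((\<bar>x\<bar> + c + 1 / l) / eta)"
proof -
  have "Tp l (\<lambda>y. f (- y)) (- x) \<le> ennreal ((\<bar>- x\<bar> + c + 1 / l) / eta)"
    by (rule Tp_absbound[OF l eta c]) (metis abs_minus_cancel f)
  then show ?thesis by (simp add: Tm_def)
qed

primrec cP :: "real \<Rightarrow> nat \<Rightarrow> nat \<Rightarrow> (real \<Rightarrow> ennreal) \<Rightarrow> real \<Rightarrow> ennreal" where
  "cP a 0 i g = g"
| "cP a (Suc k) i g = Tp (real i powr a) (cP a k (Suc i) g)"

primrec cM :: "real \<Rightarrow> nat \<Rightarrow> nat \<Rightarrow> (real \<Rightarrow> ennreal) \<Rightarrow> real \<Rightarrow> ennreal" where
  "cM a 0 i g = g"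
| "cM a (Suc k) i g = Tm (real i powr a) (cM a k (Suc i) g)"

lemma rate_pos: "1 \<le> i \<Longrightarrow> 0 < real i powr a"
  by simp

lemma cP_meas[measurable]: "g \<in> borel_measurable borel \<Longrightarrow> cP a k i g \<in> borel_measurable borel"
  by (induction k arbitrary: i) auto

lemma cM_meas[measurable]: "g \<in> borel_measurable borel \<Longrightarrow> cM a k i g \<in> borel_measurable borel"
  by (induction k arbitrary: i) auto

lemma cP_comm:
  assumes "1 \<le> i" "1 \<le> j" and [measurable]: "g \<in> borel_measurable borel"
  shows "cP a k i (Tm (real j powr a) g) = Tm (real j powr a) (cP a k i g)"
  using assms(1)
proof (induction k arbitrary: i)
  case 0 then show ?case by simp
next
  case (Suc k)
  have "cP a (Suc k) i (Tm (real j powr a) g) = Tp (real i powr a) (Tm (real j powr a) (cP a k (Suc i) g))"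
    using Suc by simp
  also have "\<dots> = Tm (real j powr a) (Tp (real i powr a) (cP a k (Suc i) g))"
    using Suc.prems assms(2) by (intro ext COMM[symmetric]) auto
  finally show ?case by simp
qed

lemma cP_const: "1 \<le> i \<Longrightarrow> cP a k i (\<lambda>_. c) = (\<lambda>_. c)"
  by (induction k arbitrary: i) (auto simp: Tp_const)

lemma cM_const: "1 \<le> i \<Longrightarrow> cM a k i (\<lambda>_. c) = (\<lambda>_. c)"
  by (induction k arbitrary: i) (auto simp: Tm_const)

lemma cP_add: "f \<in> borel_measurable borel \<Longrightarrow> g \<in> borel_measurable borel \<Longrightarrow>
   cP a k i (\<lambda>y. f y + g y) x = cP a k i f x + cP a k i g x"
proof (induction k arbitrary: i x)
  case (Suc k)
  have e: "cP a k (Suc i) (\<lambda>y. f y + g y) = (\<lambda>y. cP a k (Suc i) f y + cP a k (Suc i) g y)"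
    using Suc by (intro ext) auto
  show ?case using Suc.prems by (simp add: e Tp_add)
qed simp

lemma cM_add: "f \<in> borel_measurable borel \<Longrightarrow> g \<in> borel_measurable borel \<Longrightarrow>
   cM a k i (\<lambda>y. f y + g y) x = cM a k i f x + cM a k i g x"
proof (induction k arbitrary: i x)
  case (Suc k)
  have e: "cM a k (Suc i) (\<lambda>y. f y + g y) = (\<lambda>y. cM a k (Suc i) f y + cM a k (Suc i) g y)"
    using Suc by (intro ext) auto
  show ?case using Suc.prems by (simp add: e Tm_add)
qed simp

lemma cP_mono: "(\<And>y. f y \<le> g y) \<Longrightarrow> cP a k i f x \<le> cP a k i g x"
  by (induction k arbitrary: i x) (auto intro!: Tp_mono)

lemma cM_mono: "(\<And>y. f y \<le> g y) \<Longrightarrow> cM a k i f x \<le> cM a k i g x"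
  by (induction k arbitrary: i x) (auto intro!: Tm_mono)

lemma cP_int: "1 \<le> i \<Longrightarrow> g \<in> borel_measurable borel \<Longrightarrow>
   (\<integral>\<^sup>+x. cP a k i g x \<partial>lborel) = (\<integral>\<^sup>+x. g x \<partial>lborel)"
  by (induction k arbitrary: i) (auto simp: Tp_int)

lemma cM_int: "1 \<le> i \<Longrightarrow> g \<in> borel_measurable borel \<Longrightarrow>
   (\<integral>\<^sup>+x. cM a k i g x \<partial>lborel) = (\<integral>\<^sup>+x. g x \<partial>lborel)"
  by (induction k arbitrary: i) (auto simp: Tm_int)

lemma cP_absbound:
  assumes "1 \<le> i" "0 < eta" "0 \<le> c" "\<And>y. f y \<le> ennreal ((\<bar>y\<bar> + c) / eta)"
  shows "cP a k i f x \<le> ennreal ((\<bar>x\<bar> + c + (\<Sum>l\<in>{i..<i+k}. 1 / real l powr a)) / eta)"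
  using assms(1)
proof (induction k arbitrary: i x)
  case 0 then show ?case using assms by simp
next
  case (Suc k)
  have s: "(\<Sum>l\<in>{i..<i+Suc k}. 1 / real l powr a) = 1 / real i powr a + (\<Sum>l\<in>{Suc i..<Suc i+k}. 1 / real l powr a)"
    by (subst sum.atLeast_Suc_lessThan) auto
  define S where "S = (\<Sum>l\<in>{Suc i..<Suc i+k}. 1 / real l powr a)"
  have S0: "0 \<le> S" unfolding S_def by (intro sum_nonneg) auto
  have IH: "cP a k (Suc i) f y \<le> ennreal ((\<bar>y\<bar> + (c + S)) / eta)" for y
    using Suc.IH[of "Suc i" y] unfolding S_def by (simp add: add_ac)
  have "cP a (Suc k) i f x \<le> ennreal ((\<bar>x\<bar> + (c + S) + 1 / real i powr a) / eta)"
    unfolding cP.simps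
    by (rule Tp_absbound[OF _ assms(2) _ IH]) (use Suc.prems S0 assms(3) in auto)
  then show ?case unfolding s S_def[symmetric] by (simp only: add_ac)
qed

lemma cM_absbound:
  assumes "1 \<le> i" "0 < eta" "0 \<le> c" "\<And>y. f y \<le> ennreal ((\<bar>y\<bar> + c) / eta)"
  shows "cM a k i f x \<le> ennreal ((\<bar>x\<bar> + c + (\<Sum>l\<in>{i..<i+k}. 1 / real l powr a)) / eta)"
  using assms(1)
proof (induction k arbitrary: i x)
  case 0 then show ?case using assms by simp
next
  case (Suc k)
  have s: "(\<Sum>l\<in>{i..<i+Suc k}. 1 / real l powr a) = 1 / real i powr a + (\<Sum>l\<in>{Suc i..<Suc i+k}. 1 / real l powr a)"
    by (subst sum.atLeast_Suc_lessThan) auto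
  define S where "S = (\<Sum>l\<in>{Suc i..<Suc i+k}. 1 / real l powr a)"
  have S0: "0 \<le> S" unfolding S_def by (intro sum_nonneg) auto
  have IH: "cM a k (Suc i) f y \<le> ennreal ((\<bar>y\<bar> + (c + S)) / eta)" for y
    using Suc.IH[of "Suc i" y] unfolding S_def by (simp add: add_ac)
  have "cM a (Suc k) i f x \<le> ennreal ((\<bar>x\<bar> + (c + S) + 1 / real i powr a) / eta)"
    unfolding cM.simps
    by (rule Tm_absbound[OF _ assms(2) _ IH]) (use Suc.prems S0 assms(3) in auto)
  then show ?case unfolding s S_def[symmetric] by (simp only: add_ac)
qed

definition H :: "real \<Rightarrow> nat \<Rightarrow> (real \<Rightarrow> ennreal) \<Rightarrow> nat \<Rightarrow> nat \<Rightarrow> real \<Rightarrow> ennreal" where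
  "H a N F i j = cP a (N + 1 - i) i (cM a (N + 1 - j) j F)"

lemma H_harm:
  assumes "1 \<le> i" "i \<le> N" "1 \<le> j" "j \<le> N" and [measurable]: "F \<in> borel_measurable borel"
  shows "H a N F i j x = ennreal (real i powr a / (real i powr a + real j powr a)) * H a N F (Suc i) j x
          + ennreal (real j powr a / (real i powr a + real j powr a)) * H a N F i (Suc j) x"
proof -
  define G where "G = cM a (N - j) (Suc j) F"
  define W where "W = cP a (N - i) (Suc i) G"
  have [measurable]: "G \<in> borel_measurable borel" "W \<in> borel_measurable borel"
    unfolding G_def W_def by measurable
  have eN: "N + 1 - i = Suc (N - i)" "N + 1 - j = Suc (N - j)" "N + 1 - Suc i = N - i" "N + 1 - Suc j = N - j"
    using assms by auto
  have Hij: "H a N F i j = Tp (real i powr a) (Tm (real j powr a) W)"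
    unfolding H_def eN W_def G_def
    using assms by (simp add: cP_comm)
  have H1: "H a N F (Suc i) j = Tm (real j powr a) W"
    unfolding H_def eN W_def G_def
    using assms by (simp add: cP_comm)
  have H2: "H a N F i (Suc j) = Tp (real i powr a) W"
    unfolding H_def eN W_def G_def by simp
  show ?thesis unfolding Hij H1 H2
    by (rule KEY) (use assms in auto)
qed

lemma dist_support: "s \<in> set_pmf (bingo_dist a n) \<Longrightarrow> 1 \<le> fst s \<and> 1 \<le> snd s \<and> fst s + snd s = n + 2"
proof (induction n arbitrary: s)
  case 0 then show ?case by simp
next
  case (Suc n)
  then obtain s0 where s0: "s0 \<in> set_pmf (bingo_dist a n)" "s \<in> set_pmf (bingo_step a s0)" by auto
  then show ?case using Suc.IH[OF s0(1)]
    by (cases s0) (auto simp: bingo_step_def split: if_splits)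
qed

lemma step_int:
  assumes "1 \<le> i" "i \<le> N" "1 \<le> j" "j \<le> N" and [measurable]: "F \<in> borel_measurable borel"
  shows "(\<integral>\<^sup>+s. H a N F (fst s) (snd s) x \<partial>bingo_step a (i, j)) = H a N F i j x"
proof -
  define p where "p = real i powr a / (real i powr a + real j powr a)"
  have pos: "0 < real i powr a" "0 < real j powr a" using assms by auto
  have p1: "0 \<le> p" unfolding p_def by (intro divide_nonneg_nonneg) (use pos in linarith)+
  have p2: "p \<le> 1" unfolding p_def by (subst divide_le_eq_1_pos) (use pos in linarith)+
  note p = p1 p2
  have q: "1 - p = real j powr a / (real i powr a + real j powr a)"
  proof -
    have "real i powr a + real j powr a \<noteq> 0" using pos by linarith
    then show ?thesis unfolding p_def by (simp add: field_simps)
  qed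
  have "(\<integral>\<^sup>+s. H a N F (fst s) (snd s) x \<partial>bingo_step a (i, j))
      = H a N F (i + 1) j x * ennreal p + H a N F i (j + 1) x * ennreal (1 - p)"
  proof -
    have st: "bingo_step a (i,j) = map_pmf (\<lambda>b. if b then (i+1,j) else (i,j+1)) (bernoulli_pmf p)"
      by (simp add: bingo_step_def p_def)
    show ?thesis unfolding st nn_integral_map_pmf
      by (subst nn_integral_bernoulli_pmf[OF p]) auto
  qed
  also have "\<dots> = H a N F i j x"
    using H_harm[OF assms, of a x] unfolding q unfolding p_def by (simp add: mult.commute)
  finally show ?thesis .
qed

lemma dist_int:
  assumes "n \<le> N" and [measurable]: "F \<in> borel_measurable borel"
  shows "(\<integral>\<^sup>+s. H a N F (fst s) (snd s) x \<partial>bingo_dist a n) = H a N F 1 1 x"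
  using assms(1)
proof (induction n)
  case 0 then show ?case by simp
next
  case (Suc n)
  have "(\<integral>\<^sup>+s. H a N F (fst s) (snd s) x \<partial>bingo_dist a (Suc n))
     = (\<integral>\<^sup>+s0. (\<integral>\<^sup>+s. H a N F (fst s) (snd s) x \<partial>bingo_step a s0) \<partial>bingo_dist a n)"
    by simp
  also have "\<dots> = (\<integral>\<^sup>+s0. H a N F (fst s0) (snd s0) x \<partial>bingo_dist a n)"
  proof (intro nn_integral_cong_AE AE_pmfI)
    fix s0 assume s0: "s0 \<in> set_pmf (bingo_dist a n)"
    obtain i j where ij: "s0 = (i, j)" by (cases s0)
    from dist_support[OF s0] Suc.prems have "1 \<le> i" "i \<le> N" "1 \<le> j" "j \<le> N" unfolding ij by auto
    then show "(\<integral>\<^sup>+s. H a N F (fst s) (snd s) x \<partial>bingo_step a s0) = H a N F (fst s0) (snd s0) x"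
      unfolding ij by (simp add: step_int)
  qed
  also have "\<dots> = H a N F 1 1 x" using Suc by simp
  finally show ?case .
qed

lemma H_meas[measurable]: "F \<in> borel_measurable borel \<Longrightarrow> H a N F i j \<in> borel_measurable borel"
  unfolding H_def by measurable

lemma good_bound:
  assumes "1 \<le> i" "1 \<le> j" "i \<le> N + 1" "j \<le> N + 1" and eta: "0 < eta"
  shows "1 \<le> H a N (indicator {-eta..eta}) i j 0
     + ennreal (((\<Sum>l\<in>{i..<N+1}. 1 / real l powr a) + (\<Sum>l\<in>{j..<N+1}. 1 / real l powr a)) / eta)"
proof -
  define F :: "real \<Rightarrow> ennreal" where "F = indicator {-eta..eta}"
  define G where "G = (\<lambda>y. ennreal (\<bar>y\<bar> / eta))"
  have [measurable]: "F \<in> borel_measurable borel" "G \<in> borel_measurable borel"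
    unfolding F_def G_def by measurable
  have "1 = H a N (\<lambda>_. 1) i j 0"
    using assms by (simp add: H_def cP_const cM_const)
  also have "\<dots> \<le> H a N (\<lambda>y. F y + G y) i j 0"
    unfolding H_def
  proof (intro cP_mono cM_mono)
    fix y :: real
    show "1 \<le> F y + G y"
    proof (cases "\<bar>y\<bar> \<le> eta")
      case True then show ?thesis by (simp add: F_def indicator_def abs_le_iff)
    next
      case False
      then have "1 \<le> ennreal (\<bar>y\<bar> / eta)" using eta by (simp add: ennreal_1[symmetric] del: ennreal_1)
      then show ?thesis unfolding G_def by (rule order_trans) simp
    qed
  qed
  also have "\<dots> = H a N F i j 0 + H a N G i j 0"
  proof -
    have e: "cM a (N+1-j) j (\<lambda>y. F y + G y) = (\<lambda>y. cM a (N+1-j) j F y + cM a (N+1-j) j G y)"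
      by (intro ext cM_add) auto
    show ?thesis unfolding H_def e by (rule cP_add) auto
  qed
  also have "H a N G i j 0 \<le> ennreal (((\<Sum>l\<in>{i..<N+1}. 1 / real l powr a) + (\<Sum>l\<in>{j..<N+1}. 1 / real l powr a)) / eta)"
  proof -
    define Sj where "Sj = (\<Sum>l\<in>{j..<N+1}. 1 / real l powr a)"
    have Sj0: "0 \<le> Sj" unfolding Sj_def by (intro sum_nonneg) auto
    have "cM a (N + 1 - j) j G y \<le> ennreal ((\<bar>y\<bar> + Sj) / eta)" for y
      using cM_absbound[OF assms(2) eta order_refl, of G a "N + 1 - j" y] assms
      unfolding Sj_def by (simp add: G_def)
    then have "cP a (N + 1 - i) i (cM a (N + 1 - j) j G) 0 \<le> ennreal ((\<bar>0\<bar> + Sj + (\<Sum>l\<in>{i..<i + (N + 1 - i)}. 1 / real l powr a)) / eta)"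
      by (intro cP_absbound[OF assms(1) eta Sj0])
    then show ?thesis using assms unfolding H_def Sj_def by (simp add: add_ac)
  qed
  finally show ?thesis unfolding F_def by (simp add: add_left_mono)
qed

lemma H11:
  assumes N: "1 \<le> N" and eta: "0 < eta"
  shows "H a N (indicator {-eta..eta}) 1 1 0 \<le> ennreal (2 * eta)"
proof -
  define F :: "real \<Rightarrow> ennreal" where "F = indicator {-eta..eta}"
  have [measurable]: "F \<in> borel_measurable borel" unfolding F_def by measurable
  define C where "C = cP a (N - 1) 2 (cM a N 1 F)"
  have [measurable]: "C \<in> borel_measurable borel" unfolding C_def by measurable
  obtain N' where N': "N = Suc N'" using N by (cases N) auto
  have "H a N F 1 1 0 = Tp 1 C 0"
    unfolding H_def C_def N' by (simp add: numeral_2_eq_2)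
  also have "\<dots> \<le> (\<integral>\<^sup>+t. C t \<partial>lborel)"
    unfolding Tp_def
  proof (intro nn_integral_mono)
    fix t
    have "ennreal (exponential_density 1 t) \<le> 1"
      by (auto simp: exponential_density_def)
    then have "ennreal (exponential_density 1 t) * C t \<le> 1 * C t" by (rule mult_right_mono) simp
    then show "ennreal (exponential_density 1 t) * C (0 + t) \<le> C t" by simp
  qed
  also have "\<dots> = (\<integral>\<^sup>+t. F t \<partial>lborel)"
    unfolding C_def by (simp add: cP_int cM_int)
  also have "\<dots> = ennreal (2 * eta)"
    unfolding F_def using eta by simp
  finally show ?thesis unfolding F_def .
qed

definition tailsum :: "real \<Rightarrow> nat \<Rightarrow> real" where
  "tailsum a M = (\<Sum>l. 1 / real (l + M) powr a)"

lemma tail_summable: "1 < a \<Longrightarrow> summable (\<lambda>l. 1 / real (l + M) powr a)"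
proof -
  assume a: "1 < a"
  have "summable (\<lambda>n. real n powr (- a))" using a by (subst summable_real_powr_iff) auto
  then have "summable (\<lambda>n. real (n + M) powr (- a))" by (rule summable_ignore_initial_segment)
  then show ?thesis by (simp add: powr_minus_divide)
qed

lemma tailsum_nonneg: "1 < a \<Longrightarrow> 0 \<le> tailsum a M"
  unfolding tailsum_def by (intro suminf_nonneg tail_summable) auto

lemma tail_bound:
  assumes a: "1 < a" and "M \<le> i"
  shows "(\<Sum>l\<in>{i..<K}. 1 / real l powr a) \<le> tailsum a M"
proof -
  have "(\<Sum>l\<in>{i..<K}. 1 / real l powr a) \<le> (\<Sum>l\<in>{M..<K}. 1 / real l powr a)"
    using assms by (intro sum_mono2) auto
  also have "\<dots> = (\<Sum>l\<in>{0..<K - M}. 1 / real (l + M) powr a)"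
    by (subst sum.atLeastLessThan_shift_0) (simp add: add.commute)
  also have "\<dots> \<le> tailsum a M"
    unfolding tailsum_def atLeast0LessThan by (intro sum_le_suminf tail_summable a) auto
  finally show ?thesis .
qed

lemma main_bound_e:
  assumes a: "1 < a" and eta: "0 < eta"
  shows "emeasure (measure_pmf (bingo_dist a n)) {s. M \<le> fst s \<and> M \<le> snd s}
     \<le> ennreal (2 * eta) + ennreal (2 * tailsum a M / eta)"
proof -
  define N where "N = n + 1"
  define F :: "real \<Rightarrow> ennreal" where "F = indicator {-eta..eta}"
  have [measurable]: "F \<in> borel_measurable borel" unfolding F_def by measurable
  define A where "A = {s::nat\<times>nat. M \<le> fst s \<and> M \<le> snd s}"
  define B where "B = ennreal (2 * tailsum a M / eta)"
  have "emeasure (measure_pmf (bingo_dist a n)) A = (\<integral>\<^sup>+s. indicator A s \<partial>bingo_dist a n)"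
    by simp
  also have "\<dots> \<le> (\<integral>\<^sup>+s. H a N F (fst s) (snd s) 0 + B \<partial>bingo_dist a n)"
  proof (intro nn_integral_mono_AE AE_pmfI)
    fix s assume s: "s \<in> set_pmf (bingo_dist a n)"
    obtain i j where ij: "s = (i, j)" by (cases s)
    from dist_support[OF s] have ij1: "1 \<le> i" "1 \<le> j" "i \<le> N + 1" "j \<le> N + 1"
      unfolding ij N_def by auto
    show "indicator A s \<le> H a N F (fst s) (snd s) 0 + B"
    proof (cases "s \<in> A")
      case False then show ?thesis by simp
    next
      case True
      then have "M \<le> i" "M \<le> j" unfolding A_def ij by auto
      have "1 \<le> H a N F i j 0
          + ennreal (((\<Sum>l\<in>{i..<N+1}. 1 / real l powr a) + (\<Sum>l\<in>{j..<N+1}. 1 / real l powr a)) / eta)"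
        unfolding F_def by (rule good_bound[OF ij1 eta])
      also have "\<dots> \<le> H a N F i j 0 + B"
        unfolding B_def
        using tail_bound[OF a \<open>M \<le> i\<close>, of "N+1"] tail_bound[OF a \<open>M \<le> j\<close>, of "N+1"] eta
        by (intro add_left_mono ennreal_leI divide_right_mono) auto
      finally show ?thesis using True unfolding ij by simp
    qed
  qed
  also have "\<dots> = (\<integral>\<^sup>+s. H a N F (fst s) (snd s) 0 \<partial>bingo_dist a n) + B"
    by (subst nn_integral_add) (auto simp: measure_pmf.emeasure_space_1)
  also have "\<dots> = H a N F 1 1 0 + B"
    by (subst dist_int) (auto simp: N_def)
  also have "\<dots> \<le> ennreal (2 * eta) + B"
    unfolding F_def by (intro add_right_mono H11 eta) (simp add: N_def)
  finally show ?thesis unfolding A_def B_def .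
qed

lemma main_bound:
  assumes a: "1 < a" and eta: "0 < eta"
  shows "measure_pmf.prob (bingo_dist a n) {s. M \<le> fst s \<and> M \<le> snd s} \<le> 2 * eta + 2 * tailsum a M / eta"
proof -
  have "ennreal (measure_pmf.prob (bingo_dist a n) {s. M \<le> fst s \<and> M \<le> snd s}) \<le> ennreal (2 * eta + 2 * tailsum a M / eta)"
    using main_bound_e[OF a eta, of n M] eta tailsum_nonneg[OF a, of M]
    by (simp add: measure_pmf.emeasure_eq_measure ennreal_plus[symmetric] del: ennreal_plus)
  then show ?thesis using eta tailsum_nonneg[OF a, of M] by (subst (asm) ennreal_le_iff) auto
qed

definition gprob :: "real \<Rightarrow> nat \<Rightarrow> nat \<Rightarrow> real" where
  "gprob a n M = measure_pmf.prob (bingo_dist a n) {s. M \<le> fst s \<and> M \<le> snd s}"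

lemma sum_eq:
  assumes "2 \<le> k"
  shows "(\<Sum>i=M..k-M. bingo_prob a i (k - i)) = gprob a (k - 2) M"
proof -
  define p where "p = bingo_dist a (k - 2)"
  define A where "A = {s::nat\<times>nat. M \<le> fst s \<and> M \<le> snd s}"
  define I where "I = (\<lambda>i. (i, k - i)) ` {M..k-M}"
  have "A \<inter> set_pmf p = I \<inter> set_pmf p"
  proof (intro equalityI subsetI)
    fix s assume s: "s \<in> A \<inter> set_pmf p"
    then have "fst s + snd s = k" using dist_support[of s a "k-2"] assms unfolding p_def by auto
    with s show "s \<in> I \<inter> set_pmf p" unfolding A_def I_def by (cases s) (auto simp: image_iff)
  next
    fix s assume "s \<in> I \<inter> set_pmf p"
    then show "s \<in> A \<inter> set_pmf p" unfolding A_def I_def by auto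
  qed
  then have "measure_pmf.prob p A = measure_pmf.prob p I"
    by (metis measure_Int_set_pmf)
  also have "\<dots> = sum (pmf p) I"
    unfolding I_def by (rule measure_measure_pmf_finite) simp
  also have "\<dots> = (\<Sum>i=M..k-M. pmf p (i, k - i))"
    unfolding I_def by (subst sum.reindex) (auto simp: inj_on_def)
  also have "\<dots> = (\<Sum>i=M..k-M. bingo_prob a i (k - i))"
    unfolding bingo_prob_def p_def by (intro sum.cong) auto
  finally show ?thesis unfolding gprob_def p_def A_def by simp
qed

lemma gprob_mono: "gprob a n M \<le> gprob a (Suc n) M"
proof -
  define A where "A = {s::nat\<times>nat. M \<le> fst s \<and> M \<le> snd s}"
  have "emeasure (measure_pmf (bingo_dist a n)) A = (\<integral>\<^sup>+s. indicator A s \<partial>bingo_dist a n)"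
    by simp
  also have "\<dots> \<le> (\<integral>\<^sup>+s0. (\<integral>\<^sup>+s. indicator A s \<partial>bingo_step a s0) \<partial>bingo_dist a n)"
  proof (intro nn_integral_mono)
    fix s0 :: "nat \<times> nat"
    show "indicator A s0 \<le> (\<integral>\<^sup>+s. indicator A s \<partial>bingo_step a s0)"
    proof (cases "s0 \<in> A")
      case False then show ?thesis by simp
    next
      case True
      have "(\<integral>\<^sup>+s. indicator A s \<partial>bingo_step a s0) = (\<integral>\<^sup>+s. 1 \<partial>bingo_step a s0)"
      proof (intro nn_integral_cong_AE AE_pmfI)
        fix s assume "s \<in> set_pmf (bingo_step a s0)"
        with True show "indicator A s = (1::ennreal)"
          unfolding A_def by (cases s0) (auto simp: bingo_step_def split: if_splits)
      qed
      then show ?thesis using True by (simp add: measure_pmf.emeasure_space_1)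
    qed
  qed
  also have "\<dots> = emeasure (measure_pmf (bingo_dist a (Suc n))) A"
    by simp
  finally show ?thesis unfolding gprob_def A_def[symmetric]
    by (simp add: measure_pmf.emeasure_eq_measure)
qed

theorem mainTheorem7:
  fixes \<alpha> :: real
  assumes "\<alpha> > 1"
  shows "(\<forall>M::nat. convergent (\<lambda>k::nat. \<Sum>i=M..k-M. bingo_prob \<alpha> i (k - i)))
         \<and> (\<lambda>M::nat. lim (\<lambda>k::nat. \<Sum>i=M..k-M. bingo_prob \<alpha> i (k - i))) \<longlonglongrightarrow> 0"
proof -
  define L where "L M = (SUP n. gprob \<alpha> n M)" for M
  have g_lim: "(\<lambda>n. gprob \<alpha> n M) \<longlonglongrightarrow> L M" for M
    unfolding L_def
  proof (rule LIMSEQ_incseq_SUP)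
    show "bdd_above (range (\<lambda>n. gprob \<alpha> n M))"
      by (rule bdd_aboveI[of _ 1]) (auto simp: gprob_def)
    show "incseq (\<lambda>n. gprob \<alpha> n M)"
      by (rule incseq_SucI) (rule gprob_mono)
  qed
  have s_lim: "(\<lambda>k. \<Sum>i=M..k-M. bingo_prob \<alpha> i (k - i)) \<longlonglongrightarrow> L M" for M
  proof (rule LIMSEQ_offset[where k=2])
    have "(\<lambda>k. \<Sum>i=M..k + 2 - M. bingo_prob \<alpha> i (k + 2 - i)) = (\<lambda>n. gprob \<alpha> n M)"
      by (rule ext, subst sum_eq) auto
    then show "(\<lambda>k. \<Sum>i=M..k + 2 - M. bingo_prob \<alpha> i (k + 2 - i)) \<longlonglongrightarrow> L M"
      using g_lim by simp
  qed
  have L_bound: "L M \<le> 2 * eta + 2 * tailsum \<alpha> M / eta" if "0 < eta" for M eta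
  proof -
    have "gprob \<alpha> n M \<le> 2 * eta + 2 * tailsum \<alpha> M / eta" for n
      unfolding gprob_def by (rule main_bound[OF assms that])
    then show ?thesis using g_lim[of M] by (intro LIMSEQ_le_const2) auto
  qed
  have L_nonneg: "0 \<le> L M" for M
    using g_lim[of M] by (intro LIMSEQ_le_const) (auto simp: gprob_def)
  have "L \<longlonglongrightarrow> 0"
  proof (rule LIMSEQ_I)
    fix r :: real assume r: "0 < r"
    have "summable (\<lambda>l. 1 / real (l + 0) powr \<alpha>)" by (rule tail_summable[OF assms])
    then have sm: "summable (\<lambda>l. 1 / real l powr \<alpha>)" by simp
    obtain N1 where N1: "\<forall>n\<ge>N1. norm (\<Sum>i. 1 / real (i + n) powr \<alpha>) < r * r / 16"
      using suminf_exist_split[OF _ sm, of "r * r / 16"] r by auto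
    show "\<exists>no. \<forall>n\<ge>no. norm (L n - 0) < r"
    proof (intro exI allI impI)
      fix n assume "N1 \<le> n"
      then have t: "tailsum \<alpha> n < r * r / 16"
        using N1 tailsum_nonneg[OF assms, of n] unfolding tailsum_def by auto
      have "L n \<le> 2 * (r / 4) + 2 * tailsum \<alpha> n / (r / 4)"
        using L_bound[of "r / 4" n] r by simp
      also have "2 * tailsum \<alpha> n / (r / 4) < 2 * (r * r / 16) / (r / 4)"
        using t r by (intro divide_strict_right_mono) auto
      also have "2 * (r * r / 16) / (r / 4) = r / 2"
        using r by (simp add: field_simps)
      finally have "L n < r" by simp
      then show "norm (L n - 0) < r" using L_nonneg[of n] by simp
    qed
  qed
  moreover have "(\<lambda>M. lim (\<lambda>k. \<Sum>i=M..k-M. bingo_prob \<alpha> i (k - i))) = L"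
    using s_lim by (intro ext limI)
  ultimately show ?thesis
    using s_lim by (auto simp: convergent_def)
qed

end
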